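(* Let $G_1$ be a connected graph on $n_1$ vertices and $m_1$ edges, and let $G_2$ be an $r_2$-regular graph on $n_2$ vertices and $m_2$ edges with Laplacian eigenvalues $\mu_1(G_2),\dots,\mu_{n_2}(G_2)$. Then \begin{align*} Kf(G_1\diamondsuit G_2)&=n_1(1+n_2+m_2)\Big[\frac{n_1m_2}{2}+\frac{n_1}{2}\Big(2r_2\sum_{i=1}^{n_2}\frac{1}{\mu_i(G_2)+2}-\sum_{i=1}^{n_2}\frac{\mu_i(G_2)}{\mu_i(G_2)+2}\Big)\\ &\qquad+2n_1\sum_{i=1}^{n_2}\frac{1}{\mu_i(G_2)+2}+\frac{m_2+n_2+1}{n_1}Kf(G_1)\Big]-\frac{n_1n_2r_2^2}{4}-\frac{5n_1m_2+2n_1n_2}{2}. \end{align*}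
   Context: All graphs are simple and undirected; the Laplacian is $L=D-A$. The resistance distance between two vertices of a connected graph is the effective resistance between them when every edge is a unit resistor, and the Kirchhoff index $Kf(G)$ of a connected graph is the sum of resistance distances over all unordered pairs of distinct vertices. The corona-vertex of the subdivision graph $G_1\diamondsuit G_2$ is obtained from $G_1$ and $|V(G_1)|$ vertex-disjoint copies of the subdivision graph $S(G_2)$ (the graph obtained from $G_2$ by inserting a new vertex into every edge) by joining the $i$-th vertex of $G_1$ to every original vertex (vertex coming from $V(G_2)$, not a subdivision vertex) of the $i$-th copy. *)

theory Defs
  imports Complex_Main "Jordan_Normal_Form.Char_Poly"
begin

definition simple_graph :: "'a set \<Rightarrow> ('a \<Rightarrow> 'a \<Rightarrow> bool) \<Rightarrow> bool" where
  "simple_graph V E \<longleftrightarrow> finite V \<and> (\<forall>u v. E u v \<longrightarrow> u \<in> V \<and> v \<in> V)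
     \<and> (\<forall>u v. E u v \<longrightarrow> E v u) \<and> (\<forall>u. \<not> E u u)"

definition connected_graph :: "'a set \<Rightarrow> ('a \<Rightarrow> 'a \<Rightarrow> bool) \<Rightarrow> bool" where
  "connected_graph V E \<longleftrightarrow> V \<noteq> {} \<and> (\<forall>u\<in>V. \<forall>v\<in>V. E\<^sup>*\<^sup>* u v)"

definition degree :: "'a set \<Rightarrow> ('a \<Rightarrow> 'a \<Rightarrow> bool) \<Rightarrow> 'a \<Rightarrow> nat" where
  "degree V E v = card {u \<in> V. E v u}"

definition regular_graph :: "'a set \<Rightarrow> ('a \<Rightarrow> 'a \<Rightarrow> bool) \<Rightarrow> nat \<Rightarrow> bool" where
  "regular_graph V E r \<longleftrightarrow> (\<forall>v\<in>V. degree V E v = r)"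

definition edges :: "'a set \<Rightarrow> ('a \<Rightarrow> 'a \<Rightarrow> bool) \<Rightarrow> 'a set set" where
  "edges V E = {{u, v} | u v. u \<in> V \<and> v \<in> V \<and> E u v}"

definition laplacian :: "'a set \<Rightarrow> ('a \<Rightarrow> 'a \<Rightarrow> bool) \<Rightarrow> ('a \<Rightarrow> real) \<Rightarrow> 'a \<Rightarrow> real" where
  "laplacian V E x w = real (degree V E w) * x w - (\<Sum>u\<in>{u \<in> V. E w u}. x u)"

definition laplacian_mat :: "'a set \<Rightarrow> ('a \<Rightarrow> 'a \<Rightarrow> bool) \<Rightarrow> (nat \<Rightarrow> 'a) \<Rightarrow> nat \<Rightarrow> real mat" where
  "laplacian_mat V E f n = mat n n (\<lambda>(i, j).
     (if i = j then real (degree V E (f i)) else 0) - (if E (f i) (f j) then 1 else 0))"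

text \<open>Resistance distance (unit resistors): inject unit current at u, extract it at v;
  the potential difference x u - x v of any solution of L x = e_u - e_v.\<close>
definition resistance :: "'a set \<Rightarrow> ('a \<Rightarrow> 'a \<Rightarrow> bool) \<Rightarrow> 'a \<Rightarrow> 'a \<Rightarrow> real" where
  "resistance V E u v = (THE r. \<exists>x. (\<forall>w\<in>V. laplacian V E x w
        = (if w = u then 1 else 0) - (if w = v then 1 else 0)) \<and> r = x u - x v)"

text \<open>Kirchhoff index: sum over unordered pairs of distinct vertices, written as half the
  sum over ordered pairs of distinct vertices.\<close>
definition kirchhoff :: "'a set \<Rightarrow> ('a \<Rightarrow> 'a \<Rightarrow> bool) \<Rightarrow> real" where
  "kirchhoff V E = (\<Sum>u\<in>V. \<Sum>v\<in>V - {u}. resistance V E u v) / 2"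

text \<open>Vertices of the corona-vertex of the subdivision graph:
  CB i = vertex i of G1, CO i v = original vertex v of the i-th copy of S(G2),
  CS i e = subdivision vertex of edge e in the i-th copy.\<close>
datatype ('a, 'b) cvert = CB 'a | CO 'a 'b | CS 'a "'b set"

definition corona_V :: "'a set \<Rightarrow> 'b set \<Rightarrow> ('b \<Rightarrow> 'b \<Rightarrow> bool) \<Rightarrow> ('a, 'b) cvert set" where
  "corona_V V1 V2 E2 = CB ` V1 \<union> {CO i v | i v. i \<in> V1 \<and> v \<in> V2}
     \<union> {CS i e | i e. i \<in> V1 \<and> e \<in> edges V2 E2}"

fun corona_E0 :: "'a set \<Rightarrow> ('a \<Rightarrow> 'a \<Rightarrow> bool) \<Rightarrow> 'b set \<Rightarrow> ('b \<Rightarrow> 'b \<Rightarrow> bool)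
    \<Rightarrow> ('a, 'b) cvert \<Rightarrow> ('a, 'b) cvert \<Rightarrow> bool" where
  "corona_E0 V1 E1 V2 E2 (CB i) (CB j) = E1 i j"
| "corona_E0 V1 E1 V2 E2 (CB i) (CO j v) = (i = j \<and> i \<in> V1 \<and> v \<in> V2)"
| "corona_E0 V1 E1 V2 E2 (CO i v) (CS j e) = (i = j \<and> i \<in> V1 \<and> e \<in> edges V2 E2 \<and> v \<in> e)"
| "corona_E0 V1 E1 V2 E2 _ _ = False"

definition corona_E :: "'a set \<Rightarrow> ('a \<Rightarrow> 'a \<Rightarrow> bool) \<Rightarrow> 'b set \<Rightarrow> ('b \<Rightarrow> 'b \<Rightarrow> bool)
    \<Rightarrow> ('a, 'b) cvert \<Rightarrow> ('a, 'b) cvert \<Rightarrow> bool" where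
  "corona_E V1 E1 V2 E2 x y \<longleftrightarrow> corona_E0 V1 E1 V2 E2 x y \<or> corona_E0 V1 E1 V2 E2 y x"

end

theory Submission
  imports Defs "Jordan_Normal_Form.Schur_Decomposition"
begin


definition nbr :: "'a set \<Rightarrow> ('a \<Rightarrow> 'a \<Rightarrow> bool) \<Rightarrow> 'a \<Rightarrow> 'a set" where
  "nbr V E w = {u \<in> V. E w u}"

lemma lap_alt:
  assumes "finite V"
  shows "laplacian V E x w = (\<Sum>u\<in>nbr V E w. x w - x u)"
  using assms by (simp add: laplacian_def degree_def nbr_def sum_subtractf)

lemma nbr_sym:
  assumes "simple_graph V E"
  shows "{w \<in> V. E w u} = nbr V E u"
  using assms unfolding simple_graph_def nbr_def by blast

lemma sum_nbr_swap:
  assumes "simple_graph V E"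
  shows "(\<Sum>w\<in>V. \<Sum>u\<in>nbr V E w. g w u) = (\<Sum>u\<in>V. \<Sum>w\<in>nbr V E u. g w u)"
proof -
  have fin: "finite V" using assms simple_graph_def by blast
  have "(\<Sum>w\<in>V. \<Sum>u\<in>nbr V E w. g w u) = (\<Sum>w\<in>V. \<Sum>u\<in>{u\<in>V. E w u}. g w u)"
    by (simp add: nbr_def)
  also have "\<dots> = (\<Sum>u\<in>V. \<Sum>w\<in>{w\<in>V. E w u}. g w u)"
    by (rule sum.swap_restrict[OF fin fin])
  also have "\<dots> = (\<Sum>u\<in>V. \<Sum>w\<in>nbr V E u. g w u)"
    using nbr_sym[OF assms] by simp
  finally show ?thesis .
qed

lemma energy:
  assumes "simple_graph V E"
  shows "(\<Sum>w\<in>V. z w * laplacian V E z w) = (\<Sum>w\<in>V. \<Sum>u\<in>nbr V E w. (z w - z u)^2) / 2"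
proof -
  have fin: "finite V" using assms simple_graph_def by blast
  have A: "(\<Sum>w\<in>V. z w * laplacian V E z w) = (\<Sum>w\<in>V. \<Sum>u\<in>nbr V E w. z w * (z w - z u))"
    by (simp add: lap_alt[OF fin] sum_distrib_left)
  also have "\<dots> = (\<Sum>w\<in>V. \<Sum>u\<in>nbr V E w. z u * (z u - z w))"
    using sum_nbr_swap[OF assms, of "\<lambda>w u. z u * (z u - z w)"] by simp
  finally have B: "(\<Sum>w\<in>V. z w * laplacian V E z w) = \<dots>" .
  have "2 * (\<Sum>w\<in>V. z w * laplacian V E z w) = (\<Sum>w\<in>V. \<Sum>u\<in>nbr V E w. z w * (z w - z u))
      + (\<Sum>w\<in>V. \<Sum>u\<in>nbr V E w. z u * (z u - z w))" using A B by simp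
  also have "\<dots> = (\<Sum>w\<in>V. \<Sum>u\<in>nbr V E w. (z w - z u)^2)"
    by (simp add: sum.distrib[symmetric] power2_eq_square algebra_simps)
  finally show ?thesis by simp
qed

lemma lap_kernel_const:
  assumes "simple_graph V E" "connected_graph V E"
    and z: "\<forall>w\<in>V. laplacian V E z w = 0" and a: "a \<in> V" and b: "b \<in> V"
  shows "z a = z b"
proof -
  have fin: "finite V" using assms simple_graph_def by blast
  have "(\<Sum>w\<in>V. \<Sum>u\<in>nbr V E w. (z w - z u)^2) = 0"
    using energy[OF assms(1), of z] z by simp
  hence "\<forall>w\<in>V. (\<Sum>u\<in>nbr V E w. (z w - z u)^2) = 0"
    by (subst (asm) sum_nonneg_eq_0_iff) (auto intro: sum_nonneg simp: fin)
  hence adj: "\<forall>w\<in>V. \<forall>u\<in>nbr V E w. z w = z u"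
    by (auto simp: sum_nonneg_eq_0_iff fin nbr_def)
  have "E\<^sup>*\<^sup>* a b" using assms(2) a b unfolding connected_graph_def by blast
  then have "z a = z b \<and> b \<in> V"
  proof (induction rule: rtranclp_induct)
    case base then show ?case using a by simp
  next
    case (step y c)
    then have "c \<in> V" using assms(1) unfolding simple_graph_def by blast
    with step adj show ?case unfolding nbr_def by auto
  qed
  then show ?thesis by simp
qed

lemma lap_diff:
  "laplacian V E (\<lambda>w. x w - y w) w = laplacian V E x w - laplacian V E y w"
  by (simp add: laplacian_def sum_subtractf algebra_simps)

lemma resistance_eq:
  assumes G: "simple_graph V E" "connected_graph V E" and u: "u \<in> V" and v: "v \<in> V"
    and x: "\<forall>w\<in>V. laplacian V E x w = (if w = u then 1 else 0) - (if w = v then 1 else 0)"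
  shows "resistance V E u v = x u - x v"
  unfolding resistance_def
proof (rule the_equality)
  show "\<exists>y. (\<forall>w\<in>V. laplacian V E y w = (if w = u then 1 else 0) - (if w = v then 1 else 0)) \<and> x u - x v = y u - y v"
    using x by blast
next
  fix r assume "\<exists>y. (\<forall>w\<in>V. laplacian V E y w = (if w = u then 1 else 0) - (if w = v then 1 else 0)) \<and> r = y u - y v"
  then obtain y where y: "\<forall>w\<in>V. laplacian V E y w = (if w = u then 1 else 0) - (if w = v then 1 else 0)"
    and r: "r = y u - y v" by blast
  have "\<forall>w\<in>V. laplacian V E (\<lambda>w. y w - x w) w = 0" using x y by (simp add: lap_diff)
  from lap_kernel_const[OF G this u v] show "r = x u - x v" using r by simp
qed



lemma kernel_surj:
  fixes M :: "'v \<Rightarrow> 'v \<Rightarrow> real"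
  assumes fin: "finite V"
    and inj: "\<And>x. \<forall>a\<in>V. (\<Sum>b\<in>V. M a b * x b) = 0 \<Longrightarrow> \<forall>a\<in>V. x a = 0"
  shows "\<exists>x. \<forall>a\<in>V. (\<Sum>b\<in>V. M a b * x b) = y a"
proof -
  define n where "n = card V"
  obtain g where g: "bij_betw g {0..<n} V" using ex_bij_betw_nat_finite[OF fin] n_def by blast
  define h where "h = inv_into {0..<n} g"
  have hg: "\<And>j. j < n \<Longrightarrow> h (g j) = j" unfolding h_def using g
    by (simp add: bij_betw_def inv_into_f_f)
  have gh: "\<And>a. a \<in> V \<Longrightarrow> g (h a) = a \<and> h a < n" unfolding h_def using g
    by (metis atLeastLessThan_iff bij_betw_def bij_betw_inv_into_right inv_into_into)
  have conv: "\<And>F. (\<Sum>b\<in>V. F b) = (\<Sum>j\<in>{0..<n}. F (g j))"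
    using sum.reindex_bij_betw[OF g] by metis
  define A :: "real mat" where "A = mat n n (\<lambda>(i,j). M (g i) (g j))"
  have Ac: "A \<in> carrier_mat n n" unfolding A_def by simp
  have Av: "\<And>v i. v \<in> carrier_vec n \<Longrightarrow> i < n \<Longrightarrow> (A *\<^sub>v v) $ i = (\<Sum>b\<in>V. M (g i) b * v $ h b)"
    by (simp add: A_def conv scalar_prod_def hg)
  have "det A \<noteq> 0"
  proof
    assume "det A = 0"
    then obtain v where v: "v \<in> carrier_vec n" "v \<noteq> 0\<^sub>v n" "A *\<^sub>v v = 0\<^sub>v n"
      using det_0_iff_vec_prod_zero_field[OF Ac] by blast
    have "\<forall>a\<in>V. (\<Sum>b\<in>V. M a b * v $ h b) = 0"
    proof
      fix a assume a: "a \<in> V"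
      have "(A *\<^sub>v v) $ h a = 0" using v gh[OF a] by simp
      then show "(\<Sum>b\<in>V. M a b * v $ h b) = 0" using Av[OF v(1)] gh[OF a] by simp
    qed
    from inj[OF this] have "\<And>j. j < n \<Longrightarrow> v $ j = 0"
      by (metis g hg bij_betwE atLeastLessThan_iff zero_le)
    then have "v = 0\<^sub>v n" using v(1) by (intro eq_vecI) auto
    with v(2) show False by simp
  qed
  from det_non_zero_imp_unit[OF Ac this, unfolded Units_def, of "()"]
  obtain B where B: "B \<in> carrier_mat n n" and AB: "A * B = 1\<^sub>m n"
    by (auto simp: ring_mat_def)
  define yv where "yv = vec n (\<lambda>i. y (g i))"
  define w where "w = B *\<^sub>v yv"
  have wc: "w \<in> carrier_vec n" unfolding w_def yv_def using B by simp
  have "A *\<^sub>v w = yv" unfolding w_def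
    using assoc_mult_mat_vec[OF Ac B, of yv] AB yv_def by simp
  show ?thesis
  proof (intro exI ballI)
    fix a assume a: "a \<in> V"
    have "(\<Sum>b\<in>V. M a b * w $ h b) = (A *\<^sub>v w) $ h a" using Av[OF wc] gh[OF a] by simp
    also have "\<dots> = y a" using \<open>A *\<^sub>v w = yv\<close> gh[OF a] yv_def by simp
    finally show "(\<Sum>b\<in>V. M a b * w $ h b) = y a" .
  qed
qed



lemma lap_kernel:
  assumes G: "simple_graph V E" and a: "a \<in> V"
  shows "laplacian V E x a = (\<Sum>b\<in>V. ((if a = b then real (degree V E a) else 0) - (if E a b then 1 else 0)) * x b)"
proof -
  have fin: "finite V" using G simple_graph_def by blast
  have "(\<Sum>b\<in>V. ((if a = b then real (degree V E a) else 0) - (if E a b then 1 else 0)) * x b)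
     = (\<Sum>b\<in>V. (if a = b then real (degree V E a) * x b else 0) - (if E a b then x b else 0))"
    by (rule sum.cong) (auto simp: left_diff_distrib)
  also have "\<dots> = (\<Sum>b\<in>V. (if a = b then real (degree V E a) * x b else 0)) - (\<Sum>b\<in>V. (if E a b then x b else 0))"
    by (simp add: sum_subtractf)
  also have "\<dots> = real (degree V E a) * x a - (\<Sum>b\<in>{b\<in>V. E a b}. x b)"
    using fin a by (simp add: sum.inter_filter[symmetric])
  finally show ?thesis by (simp add: laplacian_def)
qed

lemma lap_sum_zero:
  assumes G: "simple_graph V E"
  shows "(\<Sum>w\<in>V. laplacian V E x w) = 0"
proof -
  have fin: "finite V" using G simple_graph_def by blast
  have "(\<Sum>w\<in>V. laplacian V E x w) = (\<Sum>w\<in>V. \<Sum>u\<in>nbr V E w. x w) - (\<Sum>w\<in>V. \<Sum>u\<in>nbr V E w. x u)"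
    by (simp add: lap_alt[OF fin] sum_subtractf)
  also have "(\<Sum>w\<in>V. \<Sum>u\<in>nbr V E w. x u) = (\<Sum>w\<in>V. \<Sum>u\<in>nbr V E w. x w)"
    using sum_nbr_swap[OF G, of "\<lambda>w u. x u"] by simp
  finally show ?thesis by simp
qed

lemma resistance_exists:
  assumes G: "simple_graph V E" "connected_graph V E"
  shows "\<exists>x. \<forall>w\<in>V. laplacian V E x w = y w - (\<Sum>a\<in>V. y a) / real (card V)"
proof -
  have fin: "finite V" using G simple_graph_def by blast
  have ne: "V \<noteq> {}" using G connected_graph_def by blast
  have cpos: "real (card V) > 0" using fin ne by (simp add: card_gt_0_iff)
  define M where "M = (\<lambda>a b. ((if a = b then real (degree V E a) else 0) - (if E a b then 1 else 0)) + (1::real))"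
  have Mx: "\<And>x a. a \<in> V \<Longrightarrow> (\<Sum>b\<in>V. M a b * x b) = laplacian V E x a + (\<Sum>b\<in>V. x b)"
    by (simp add: M_def lap_kernel[OF G(1)] distrib_right sum.distrib)
  have "\<exists>x. \<forall>a\<in>V. (\<Sum>b\<in>V. M a b * x b) = y a - (\<Sum>a\<in>V. y a) / real (card V)"
  proof (rule kernel_surj[OF fin])
    fix x assume h: "\<forall>a\<in>V. (\<Sum>b\<in>V. M a b * x b) = 0"
    then have h2: "\<forall>a\<in>V. laplacian V E x a + (\<Sum>b\<in>V. x b) = 0" using Mx by simp
    then have "(\<Sum>a\<in>V. laplacian V E x a + (\<Sum>b\<in>V. x b)) = 0" by simp
    then have "real (card V) * (\<Sum>b\<in>V. x b) = 0" by (simp add: sum.distrib lap_sum_zero[OF G(1)])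
    then have s: "(\<Sum>b\<in>V. x b) = 0" using cpos by simp
    then have "\<forall>a\<in>V. laplacian V E x a = 0" using h2 by simp
    from lap_kernel_const[OF G this] obtain c where c: "\<forall>a\<in>V. x a = c"
      using ne by (metis ex_in_conv)
    then have "real (card V) * c = 0" using s by simp
    then show "\<forall>a\<in>V. x a = 0" using c cpos by simp
  qed
  then obtain x where x: "\<forall>a\<in>V. laplacian V E x a + (\<Sum>b\<in>V. x b) = y a - (\<Sum>a\<in>V. y a) / real (card V)"
    using Mx by auto
  then have "(\<Sum>a\<in>V. laplacian V E x a + (\<Sum>b\<in>V. x b)) = (\<Sum>a\<in>V. y a - (\<Sum>a\<in>V. y a) / real (card V))"
    by simp
  then have "real (card V) * (\<Sum>b\<in>V. x b) = 0" using cpos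
    by (simp add: sum.distrib lap_sum_zero[OF G(1)] sum_subtractf)
  then have "(\<Sum>b\<in>V. x b) = 0" using cpos by simp
  then show ?thesis using x by auto
qed

lemma resistance_sol:
  assumes G: "simple_graph V E" "connected_graph V E" and u: "u \<in> V" and v: "v \<in> V"
  shows "\<exists>x. \<forall>w\<in>V. laplacian V E x w = (if w = u then 1 else 0) - (if w = v then 1 else 0)"
proof -
  have fin: "finite V" using G simple_graph_def by blast
  have "(\<Sum>a\<in>V. (if a = u then 1 else 0) - (if a = v then (1::real) else 0)) = 0"
    using fin u v by (simp add: sum_subtractf)
  with resistance_exists[OF G, of "\<lambda>w. (if w = u then 1 else 0) - (if w = v then 1 else 0)"]
  show ?thesis by simp
qed

lemma shifted_lap_surj:
  assumes G: "simple_graph V E" and t: "t > 0"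
  shows "\<exists>x. \<forall>a\<in>V. t * x a + laplacian V E x a = y a"
proof -
  have fin: "finite V" using G simple_graph_def by blast
  define M where "M = (\<lambda>a b. ((if a = b then real (degree V E a) else 0) - (if E a b then 1 else 0)) + (if a = b then t else 0))"
  have Mx: "\<And>x a. a \<in> V \<Longrightarrow> (\<Sum>b\<in>V. M a b * x b) = t * x a + laplacian V E x a"
  proof -
    fix x a assume a: "a \<in> V"
    have "(\<Sum>b\<in>V. M a b * x b) = (\<Sum>b\<in>V. ((if a = b then real (degree V E a) else 0) - (if E a b then 1 else 0)) * x b + (if a = b then t * x b else 0))"
      unfolding M_def by (rule sum.cong) (auto simp: distrib_right)
    also have "\<dots> = laplacian V E x a + t * x a"
      using fin a by (simp add: sum.distrib lap_kernel[OF G a])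
    finally show "(\<Sum>b\<in>V. M a b * x b) = t * x a + laplacian V E x a" by simp
  qed
  have "\<exists>x. \<forall>a\<in>V. (\<Sum>b\<in>V. M a b * x b) = y a"
  proof (rule kernel_surj[OF fin])
    fix x assume h: "\<forall>a\<in>V. (\<Sum>b\<in>V. M a b * x b) = 0"
    then have h2: "\<forall>a\<in>V. t * x a + laplacian V E x a = 0" using Mx by simp
    have "(\<Sum>a\<in>V. x a * (t * x a + laplacian V E x a)) = 0" using h2 by simp
    moreover have "(\<Sum>a\<in>V. x a * (t * x a + laplacian V E x a))
        = t * (\<Sum>a\<in>V. (x a)^2) + (\<Sum>a\<in>V. x a * laplacian V E x a)"
      unfolding distrib_left sum.distrib sum_distrib_left power2_eq_square by (simp add: mult.left_commute)
    ultimately have eq: "t * (\<Sum>a\<in>V. (x a)^2) + (\<Sum>w\<in>V. \<Sum>u\<in>nbr V E w. (x w - x u)^2) / 2 = 0"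
      using energy[OF G, of x] by simp
    have s2: "(\<Sum>w\<in>V. \<Sum>u\<in>nbr V E w. (x w - x u)^2) \<ge> 0" by (intro sum_nonneg) auto
    have s1: "(\<Sum>a\<in>V. (x a)^2) \<ge> 0" by (intro sum_nonneg) auto
    have "t * (\<Sum>a\<in>V. (x a)^2) \<ge> 0" using s1 t by simp
    then have "t * (\<Sum>a\<in>V. (x a)^2) = 0" using eq s2 by linarith
    then have "(\<Sum>a\<in>V. (x a)^2) = 0" using t by simp
    then show "\<forall>a\<in>V. x a = 0" using fin by (simp add: sum_nonneg_eq_0_iff)
  qed
  then show ?thesis using Mx by auto
qed



lemma sum_single:
  assumes "finite A" "k \<in> A" "\<And>l. l \<in> A \<Longrightarrow> l \<noteq> k \<Longrightarrow> g l = 0"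
  shows "sum g A = g k"
proof -
  have "sum g A = g k + sum g (A - {k})" using assms by (simp add: sum.remove)
  also have "sum g (A - {k}) = 0" using assms by (intro sum.neutral) auto
  finally show ?thesis by simp
qed

definition mtr :: "nat \<Rightarrow> real mat \<Rightarrow> real" where
  "mtr n A = (\<Sum>i<n. A $$ (i,i))"

lemma mtr_comm:
  assumes "A \<in> carrier_mat n n" "B \<in> carrier_mat n n"
  shows "mtr n (A * B) = mtr n (B * A)"
proof -
  have "mtr n (A * B) = (\<Sum>i<n. \<Sum>k<n. A $$ (i,k) * B $$ (k,i))"
    using assms by (simp add: mtr_def scalar_prod_def atLeast0LessThan)
  also have "\<dots> = (\<Sum>k<n. \<Sum>i<n. B $$ (k,i) * A $$ (i,k))"
    by (subst sum.swap) (simp add: mult.commute)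
  also have "\<dots> = mtr n (B * A)"
    using assms by (simp add: mtr_def scalar_prod_def atLeast0LessThan)
  finally show ?thesis .
qed

lemma upper_tri_inv_diag:
  fixes U C :: "real mat"
  assumes U: "U \<in> carrier_mat n n" and ut: "upper_triangular U" and C: "C \<in> carrier_mat n n"
    and UC: "U * C = 1\<^sub>m n" and j: "j < n"
  shows "U $$ (j,j) * C $$ (j,j) = 1"
proof -
  have "det U * det C = 1" using det_mult[OF U C] UC by simp
  then have "det U \<noteq> 0" by auto
  then have "prod_list (diag_mat U) \<noteq> 0" using det_upper_triangular[OF ut U] by simp
  then have nz: "\<And>k. k < n \<Longrightarrow> U $$ (k,k) \<noteq> 0"
    using U by (auto simp: diag_mat_def prod_list_zero_iff)
  have entry: "\<And>k. k < n \<Longrightarrow> (\<Sum>l<n. U $$ (k,l) * C $$ (l,j)) = (if k = j then 1 else 0)"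
  proof -
    fix k assume k: "k < n"
    have "(U * C) $$ (k,j) = (if k = j then 1 else 0)" using UC k j by simp
    then show "(\<Sum>l<n. U $$ (k,l) * C $$ (l,j)) = (if k = j then 1 else 0)"
      using U C k j by (simp add: scalar_prod_def atLeast0LessThan)
  qed
  have low: "\<forall>k. n - m \<le> k \<and> k < n \<and> j < k \<longrightarrow> C $$ (k,j) = 0" for m
  proof (induction m)
    case 0 then show ?case by auto
  next
    case (Suc m)
    show ?case
    proof (intro allI impI)
      fix k assume k: "n - Suc m \<le> k \<and> k < n \<and> j < k"
      show "C $$ (k,j) = 0"
      proof (cases "n - m \<le> k")
        case True then show ?thesis using Suc k by blast
      next
        case False
        have "(\<Sum>l<n. U $$ (k,l) * C $$ (l,j)) = U $$ (k,k) * C $$ (k,j)"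
        proof (rule sum_single)
          fix l assume l: "l \<in> {..<n}" "l \<noteq> k"
          show "U $$ (k,l) * C $$ (l,j) = 0"
          proof (cases "l < k")
            case True then show ?thesis using ut U k by (auto simp: upper_triangular_def)
          next
            case False then have "k < l" using l by simp
            then have "C $$ (l,j) = 0" using Suc k False l by auto
            then show ?thesis by simp
          qed
        qed (use k in auto)
        then have "U $$ (k,k) * C $$ (k,j) = 0" using entry[of k] k by simp
        then show ?thesis using nz[of k] k by simp
      qed
    qed
  qed
  have "(\<Sum>l<n. U $$ (j,l) * C $$ (l,j)) = U $$ (j,j) * C $$ (j,j)"
  proof (rule sum_single)
    fix l assume l: "l \<in> {..<n}" "l \<noteq> j"
    show "U $$ (j,l) * C $$ (l,j) = 0"
    proof (cases "l < j")
      case True then show ?thesis using ut U j by (auto simp: upper_triangular_def)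
    next
      case False then have "j < l" using l by simp
      then have "C $$ (l,j) = 0" using low[of n] l by auto
      then show ?thesis by simp
    qed
  qed (use j in auto)
  then show ?thesis using entry[OF j] by simp
qed



lemma reg_lap:
  assumes "regular_graph V E r" "w \<in> V"
  shows "laplacian V E x w = real r * x w - (\<Sum>u\<in>nbr V E w. x u)"
  using assms by (simp add: laplacian_def regular_graph_def nbr_def)

lemma K_exists:
  fixes V2 :: "'b set" and E2 and f :: "nat \<Rightarrow> 'b" and mu :: "nat \<Rightarrow> real"
  assumes G2: "simple_graph V2 E2" "regular_graph V2 E2 r2"
    and f: "bij_betw f {..<n2} V2"
    and mu: "char_poly (laplacian_mat V2 E2 f n2) = (\<Prod>i<n2. [:- mu i, 1:])"
  shows "\<exists>K. (\<forall>w\<in>V2. \<forall>v\<in>V2. (real r2 + 2) * K w v - (\<Sum>b\<in>nbr V2 E2 w. K b v) = (if w = v then 1 else 0))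
     \<and> (\<Sum>v\<in>V2. K v v) = (\<Sum>i<n2. 1 / (mu i + 2)) \<and> (\<forall>i<n2. mu i + 2 \<noteq> 0)"
proof -
  have fin: "finite V2" using G2 simple_graph_def by blast
  define K where "K = (\<lambda>w v. (SOME x. \<forall>a\<in>V2. 2 * x a + laplacian V2 E2 x a = (if a = v then 1 else 0)) w)"
  have Kcol: "\<forall>a\<in>V2. 2 * K a v + laplacian V2 E2 (\<lambda>w. K w v) a = (if a = v then 1 else 0)" for v
  proof -
    from shifted_lap_surj[OF G2(1), of 2 "\<lambda>a. if a = v then 1 else 0"]
    obtain x where "\<forall>a\<in>V2. 2 * x a + laplacian V2 E2 x a = (if a = v then 1 else 0)" by auto
    then show ?thesis unfolding K_def by (rule someI[where P = "\<lambda>x. \<forall>a\<in>V2. 2 * x a + laplacian V2 E2 x a = (if a = v then 1 else 0)"])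
  qed
  have KE: "\<forall>w\<in>V2. \<forall>v\<in>V2. (real r2 + 2) * K w v - (\<Sum>b\<in>nbr V2 E2 w. K b v) = (if w = v then 1 else 0)"
  proof (intro ballI)
    fix w v assume w: "w \<in> V2" and v: "v \<in> V2"
    have "2 * K w v + laplacian V2 E2 (\<lambda>w. K w v) w = (if w = v then 1 else 0)" using Kcol w by blast
    then show "(real r2 + 2) * K w v - (\<Sum>b\<in>nbr V2 E2 w. K b v) = (if w = v then 1 else 0)"
      using reg_lap[OF G2(2) w] by (simp add: algebra_simps)
  qed
  define Lm where "Lm = laplacian_mat V2 E2 f n2"
  define A2 where "A2 = Lm + 2 \<cdot>\<^sub>m 1\<^sub>m n2"
  define Km where "Km = mat n2 n2 (\<lambda>(i,j). K (f i) (f j))"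
  have Lc: "Lm \<in> carrier_mat n2 n2" unfolding Lm_def laplacian_mat_def by simp
  have A2c: "A2 \<in> carrier_mat n2 n2" unfolding A2_def using Lc by simp
  have Kc: "Km \<in> carrier_mat n2 n2" unfolding Km_def by simp
  have conv: "\<And>F. (\<Sum>b\<in>V2. F b) = (\<Sum>k<n2. F (f k))"
    using sum.reindex_bij_betw[OF f] by metis
  have finj: "\<And>i j. i < n2 \<Longrightarrow> j < n2 \<Longrightarrow> f i = f j \<longleftrightarrow> i = j"
    using f unfolding bij_betw_def inj_on_def by auto
  have fV: "\<And>i. i < n2 \<Longrightarrow> f i \<in> V2" using f bij_betwE by blast
  have AK: "A2 * Km = 1\<^sub>m n2"
  proof (rule eq_matI)
    fix i j assume i: "i < dim_row (1\<^sub>m n2)" and j: "j < dim_col (1\<^sub>m n2)"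
    then have i: "i < n2" and j: "j < n2" by auto
    have "(A2 * Km) $$ (i,j) = (\<Sum>k<n2. (Lm $$ (i,k) + (if i = k then 2 else 0)) * K (f k) (f j))"
      using i j A2c Kc Lc apply (simp add: scalar_prod_def atLeast0LessThan A2_def Km_def)
      by (intro sum.cong) auto
    also have "\<dots> = (\<Sum>k<n2. Lm $$ (i,k) * K (f k) (f j) + (if i = k then 2 * K (f k) (f j) else 0))"
      by (intro sum.cong) (auto simp: distrib_right)
    also have "\<dots> = (\<Sum>k<n2. Lm $$ (i,k) * K (f k) (f j)) + 2 * K (f i) (f j)"
      using i by (simp add: sum.distrib)
    also have "(\<Sum>k<n2. Lm $$ (i,k) * K (f k) (f j))
       = (\<Sum>k<n2. ((if f i = f k then real (degree V2 E2 (f i)) else 0) - (if E2 (f i) (f k) then 1 else 0)) * K (f k) (f j))"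
      using i by (intro sum.cong) (auto simp: Lm_def laplacian_mat_def finj)
    also have "\<dots> = laplacian V2 E2 (\<lambda>w. K w (f j)) (f i)"
      using lap_kernel[OF G2(1) fV[OF i], of "\<lambda>w. K w (f j)"] conv[of "\<lambda>b. ((if f i = b then real (degree V2 E2 (f i)) else 0) - (if E2 (f i) b then 1 else 0)) * K b (f j)"] by simp
    finally have "(A2 * Km) $$ (i,j) = laplacian V2 E2 (\<lambda>w. K w (f j)) (f i) + 2 * K (f i) (f j)" .
    also have "\<dots> = (if i = j then 1 else 0)"
      using Kcol[of "f j"] fV[OF i] finj[OF i j] by auto
    finally show "(A2 * Km) $$ (i,j) = 1\<^sub>m n2 $$ (i,j)" using i j by simp
  qed (use A2c Kc in auto)
  define es where "es = map mu [0..<n2]"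
  have cp: "char_poly Lm = (\<Prod>e\<leftarrow>es. [:- e, 1:])"
  proof -
    have "(\<Prod>i<n2. [:- mu i, 1:]) = (\<Prod>i\<in>set [0..<n2]. [:- mu i, 1:])"
      by (simp add: atLeast0LessThan)
    also have "\<dots> = (\<Prod>i\<leftarrow>[0..<n2]. [:- mu i, 1:])"
      by (rule prod.distinct_set_conv_list) simp
    finally show ?thesis using mu by (simp add: Lm_def es_def comp_def)
  qed
  obtain B P Q where sd: "schur_decomposition Lm es = (B,P,Q)" by (cases "schur_decomposition Lm es") auto
  from schur_decomposition[OF Lc cp sd]
  have sim: "similar_mat_wit Lm B P Q" and ut: "upper_triangular B" and dg: "diag_mat B = es" by auto
  from similar_mat_witD2[OF Lc sim] have PQ: "P * Q = 1\<^sub>m n2" and QP: "Q * P = 1\<^sub>m n2"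
    and LB: "Lm = P * B * Q" and Bc: "B \<in> carrier_mat n2 n2" and Pc: "P \<in> carrier_mat n2 n2"
    and Qc: "Q \<in> carrier_mat n2 n2" by auto
  define U where "U = B + 2 \<cdot>\<^sub>m 1\<^sub>m n2"
  define C where "C = Q * Km * P"
  have Uc: "U \<in> carrier_mat n2 n2" unfolding U_def using Bc by simp
  have Cc: "C \<in> carrier_mat n2 n2" unfolding C_def using Qc Kc Pc by simp
  have QLP: "Q * Lm * P = B"
  proof -
    have "Q * Lm * P = (Q * P) * B * (Q * P)" using LB Pc Bc Qc by (simp add: assoc_mult_mat[of _ n2 n2 _ n2 _ n2])
    then show ?thesis using QP Bc by simp
  qed
  have QAP: "Q * A2 * P = U"
  proof -
    have "Q * A2 * P = (Q * Lm + Q * (2 \<cdot>\<^sub>m 1\<^sub>m n2)) * P"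
      unfolding A2_def using Qc Lc by (simp add: mult_add_distrib_mat[of _ n2 n2])
    also have "\<dots> = Q * Lm * P + Q * (2 \<cdot>\<^sub>m 1\<^sub>m n2) * P"
      using Qc Lc Pc by (simp add: add_mult_distrib_mat[of _ n2 n2])
    also have "Q * (2 \<cdot>\<^sub>m 1\<^sub>m n2) * P = 2 \<cdot>\<^sub>m (Q * P)"
    proof -
      have "Q * (2 \<cdot>\<^sub>m 1\<^sub>m n2) = 2 \<cdot>\<^sub>m Q" using mult_smult_distrib[OF Qc one_carrier_mat, of 2] Qc by simp
      then show ?thesis using mult_smult_assoc_mat[OF Qc Pc] by simp
    qed
    finally show ?thesis using QLP QP U_def by simp
  qed
  have QAc: "Q * A2 \<in> carrier_mat n2 n2" using Qc A2c by simp
  have QKc: "Q * Km \<in> carrier_mat n2 n2" using Qc Kc by simp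
  have KPc: "Km * P \<in> carrier_mat n2 n2" using Kc Pc by simp
  have PC: "P * C = Km * P"
  proof -
    have "P * C = (P * (Q * Km)) * P" unfolding C_def using assoc_mult_mat[OF Pc QKc Pc] by simp
    also have "P * (Q * Km) = (P * Q) * Km" using assoc_mult_mat[OF Pc Qc Kc] by simp
    finally show ?thesis using PQ Kc by simp
  qed
  have UC: "U * C = 1\<^sub>m n2"
  proof -
    have "U * C = (Q * A2) * (P * C)" unfolding QAP[symmetric] using assoc_mult_mat[OF QAc Pc Cc] by simp
    also have "\<dots> = ((Q * A2) * Km) * P" unfolding PC using assoc_mult_mat[OF QAc Kc Pc] by simp
    also have "(Q * A2) * Km = Q * (A2 * Km)" using assoc_mult_mat[OF Qc A2c Kc] by simp
    finally show ?thesis using AK QP Qc by simp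
  qed
  have utU: "upper_triangular U" using ut Bc unfolding U_def upper_triangular_def by auto
  have Udiag: "\<And>i. i < n2 \<Longrightarrow> U $$ (i,i) = mu i + 2"
  proof -
    fix i assume i: "i < n2"
    have "B $$ (i,i) = es ! i" using dg[symmetric] Bc i by (simp add: diag_mat_def)
    then show "U $$ (i,i) = mu i + 2" using i Bc by (simp add: U_def es_def)
  qed
  have ud: "\<And>i. i < n2 \<Longrightarrow> (mu i + 2) * C $$ (i,i) = 1"
    using upper_tri_inv_diag[OF Uc utU Cc UC] Udiag by metis
  have inv1: "\<And>a c. a * c = (1::real) \<Longrightarrow> c = 1 / a"
    by (metis div_by_1 mult_zero_left nonzero_mult_div_cancel_left zero_neq_one)
  have tr1: "mtr n2 C = (\<Sum>i<n2. 1 / (mu i + 2))"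
    unfolding mtr_def using ud inv1 by (intro sum.cong) auto
  have "C = Q * (Km * P)" unfolding C_def using assoc_mult_mat[OF Qc Kc Pc] by simp
  then have "mtr n2 C = mtr n2 ((Km * P) * Q)" using mtr_comm[OF Qc KPc] by simp
  also have "(Km * P) * Q = Km" using assoc_mult_mat[OF Kc Pc Qc] PQ Kc by simp
  also have "mtr n2 Km = (\<Sum>v\<in>V2. K v v)" unfolding mtr_def Km_def using conv[of "\<lambda>v. K v v"] by simp
  finally have "(\<Sum>v\<in>V2. K v v) = (\<Sum>i<n2. 1 / (mu i + 2))" using tr1 by simp
  moreover have "\<forall>i<n2. mu i + 2 \<noteq> 0" using ud by (metis mult_zero_left zero_neq_one)
  ultimately show ?thesis using KE by blast
qed



fun blk :: "('a, 'b) cvert \<Rightarrow> 'a" where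
  "blk (CB k) = k" | "blk (CO k v) = k" | "blk (CS k e) = k"

locale cor =
  fixes V1 :: "'a set" and E1 :: "'a \<Rightarrow> 'a \<Rightarrow> bool"
    and V2 :: "'b set" and E2 :: "'b \<Rightarrow> 'b \<Rightarrow> bool" and r2 :: nat
  assumes G1s: "simple_graph V1 E1" and G1c: "connected_graph V1 E1"
    and G2s: "simple_graph V2 E2" and G2r: "regular_graph V2 E2 r2"
begin

abbreviation "VH \<equiv> corona_V V1 V2 E2"
abbreviation "EH \<equiv> corona_E V1 E1 V2 E2"
abbreviation "ED \<equiv> edges V2 E2"
abbreviation "N2 \<equiv> nbr V2 E2"
abbreviation "N1 \<equiv> nbr V1 E1"

lemma fin1: "finite V1" using G1s unfolding simple_graph_def by simp
lemma fin2: "finite V2" using G2s unfolding simple_graph_def by simp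
lemma E1V: "E1 a b \<Longrightarrow> a \<in> V1 \<and> b \<in> V1" using G1s unfolding simple_graph_def by simp
lemma E2V: "E2 a b \<Longrightarrow> a \<in> V2 \<and> b \<in> V2" using G2s unfolding simple_graph_def by simp
lemma E1sym: "E1 a b \<Longrightarrow> E1 b a" using G1s unfolding simple_graph_def by simp
lemma E2sym: "E2 a b \<Longrightarrow> E2 b a" using G2s unfolding simple_graph_def by simp
lemma E1irr: "\<not> E1 a a" using G1s unfolding simple_graph_def by simp
lemma E2irr: "\<not> E2 a a" using G2s unfolding simple_graph_def by simp

lemma ED_iff: "e \<in> ED \<longleftrightarrow> (\<exists>a b. e = {a,b} \<and> E2 a b)"
proof
  assume "e \<in> ED"
  then obtain a b where "e = {a,b}" "E2 a b" unfolding edges_def by auto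
  then show "\<exists>a b. e = {a,b} \<and> E2 a b" by (intro exI conjI)
next
  assume "\<exists>a b. e = {a,b} \<and> E2 a b"
  then obtain a b where ab: "e = {a,b}" "E2 a b" by (elim exE conjE)
  then have "a \<in> V2" "b \<in> V2" using E2V by auto
  then show "e \<in> ED" unfolding edges_def using ab by auto
qed

lemma ED_obt:
  assumes "e \<in> ED" obtains a b where "e = {a,b}" "E2 a b" "a \<in> V2" "b \<in> V2" "a \<noteq> b"
proof -
  from assms obtain a b where ab: "e = {a,b}" "E2 a b" unfolding ED_iff by (elim exE conjE)
  moreover have "a \<in> V2" "b \<in> V2" using E2V ab by auto
  moreover have "a \<noteq> b" using ab E2irr by auto
  ultimately show ?thesis using that by blast
qed

lemma ED_sub: "e \<in> ED \<Longrightarrow> e \<subseteq> V2" by (elim ED_obt) auto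

lemma ED_card: "e \<in> ED \<Longrightarrow> card e = 2" by (elim ED_obt) auto

lemma ED_fin: "finite ED"
proof -
  have "ED \<subseteq> Pow V2" using ED_sub by auto
  then show ?thesis using fin2 finite_subset by auto
qed

lemma ED_mem: "e \<in> ED \<Longrightarrow> a \<in> e \<Longrightarrow> a \<in> V2" using ED_sub by auto

lemma e_fin: "e \<in> ED \<Longrightarrow> finite e" by (elim ED_obt) auto

lemma N2_card: "w \<in> V2 \<Longrightarrow> card (N2 w) = r2"
  using G2r unfolding regular_graph_def degree_def nbr_def by simp

lemma N2_fin: "finite (N2 w)" unfolding nbr_def using fin2 by simp
lemma N1_fin: "finite (N1 w)" unfolding nbr_def using fin1 by simp

lemma EH_simps[simp]:
  "EH (CB k) (CB j) = (E1 k j \<or> E1 j k)"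
  "EH (CB k) (CO j v) = (k = j \<and> k \<in> V1 \<and> v \<in> V2)"
  "EH (CB k) (CS j e) = False"
  "EH (CO k w) (CB j) = (j = k \<and> k \<in> V1 \<and> w \<in> V2)"
  "EH (CO k w) (CO j v) = False"
  "EH (CO k w) (CS j e) = (k = j \<and> k \<in> V1 \<and> e \<in> ED \<and> w \<in> e)"
  "EH (CS k e) (CB j) = False"
  "EH (CS k e) (CO j v) = (j = k \<and> k \<in> V1 \<and> e \<in> ED \<and> v \<in> e)"
  "EH (CS k e) (CS j f) = False"
  by (auto simp: corona_E_def)

lemma VH_simps[simp]:
  "CB k \<in> VH \<longleftrightarrow> k \<in> V1"
  "CO k v \<in> VH \<longleftrightarrow> k \<in> V1 \<and> v \<in> V2"
  "CS k e \<in> VH \<longleftrightarrow> k \<in> V1 \<and> e \<in> ED"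
  by (auto simp: corona_V_def)

lemma nbrB: assumes k: "k \<in> V1" shows "nbr VH EH (CB k) = CB ` N1 k \<union> CO k ` V2"
proof (rule Set.set_eqI)
  fix x
  show "x \<in> nbr VH EH (CB k) \<longleftrightarrow> x \<in> CB ` N1 k \<union> CO k ` V2"
    by (cases x) (auto simp: nbr_def k dest: E1V E1sym)
qed

lemma nbrO: assumes k: "k \<in> V1" and w: "w \<in> V2" shows "nbr VH EH (CO k w) = insert (CB k) (CS k ` {e \<in> ED. w \<in> e})"
proof (rule Set.set_eqI)
  fix x
  show "x \<in> nbr VH EH (CO k w) \<longleftrightarrow> x \<in> insert (CB k) (CS k ` {e \<in> ED. w \<in> e})"
    by (cases x) (auto simp: nbr_def k w)
qed

lemma nbrS: assumes k: "k \<in> V1" and e: "e \<in> ED" shows "nbr VH EH (CS k e) = CO k ` e"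
proof (rule Set.set_eqI)
  fix x
  show "x \<in> nbr VH EH (CS k e) \<longleftrightarrow> x \<in> CO k ` e"
    using ED_sub[OF e] by (cases x) (auto simp: nbr_def k e)
qed

lemma VH_eq: "VH = (\<Union>k\<in>V1. insert (CB k) (CO k ` V2 \<union> CS k ` ED))"
proof (rule Set.set_eqI)
  fix x show "x \<in> VH \<longleftrightarrow> x \<in> (\<Union>k\<in>V1. insert (CB k) (CO k ` V2 \<union> CS k ` ED))"
    by (cases x) auto
qed

lemma finVH: "finite VH"
  unfolding VH_eq using fin1 fin2 ED_fin by auto

lemma simpleH: "simple_graph VH EH"
proof -
  have "\<forall>u v. EH u v \<longrightarrow> u \<in> VH \<and> v \<in> VH"
  proof (intro allI impI)
    fix u v assume "EH u v" then show "u \<in> VH \<and> v \<in> VH"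
      by (cases u; cases v) (auto dest: E1V ED_mem)
  qed
  moreover have "\<forall>u v. EH u v \<longrightarrow> EH v u" unfolding corona_E_def by blast
  moreover have "\<forall>u. \<not> EH u u"
  proof
    fix u show "\<not> EH u u" by (cases u) (auto simp: E1irr)
  qed
  ultimately show ?thesis unfolding simple_graph_def using finVH by blast
qed

lemma EH_sym: "EH u v \<Longrightarrow> EH v u" unfolding corona_E_def by blast

lemma to_root: "x \<in> VH \<Longrightarrow> EH\<^sup>*\<^sup>* x (CB (blk x)) \<and> EH\<^sup>*\<^sup>* (CB (blk x)) x"
proof (cases x)
  case (CB k) then show ?thesis by simp
next
  case (CO k v)
  assume "x \<in> VH"
  then have "EH x (CB (blk x))" "EH (CB (blk x)) x" using CO by auto
  then show ?thesis by auto
next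
  case (CS k e)
  assume x: "x \<in> VH"
  then have ke: "k \<in> V1" "e \<in> ED" using CS by auto
  then obtain a b where ab: "e = {a,b}" "a \<in> V2" by (elim ED_obt) auto
  have "EH x (CO k a)" "EH (CO k a) (CB k)" "EH (CB k) (CO k a)" "EH (CO k a) x"
    using CS ke ab by auto
  then show ?thesis using CS
    by (metis blk.simps(3) converse_rtranclp_into_rtranclp r_into_rtranclp)
qed

lemma lift_path: "E1\<^sup>*\<^sup>* i j \<Longrightarrow> EH\<^sup>*\<^sup>* (CB i) (CB j)"
proof (induction rule: rtranclp_induct)
  case base then show ?case by simp
next
  case (step y z) then have "EH (CB y) (CB z)" by simp
  with step show ?case by (meson rtranclp.rtrancl_into_rtrancl)
qed

lemma blkV: "x \<in> VH \<Longrightarrow> blk x \<in> V1" by (cases x) auto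

lemma connH: "connected_graph VH EH"
proof -
  have ne: "V1 \<noteq> {}" using G1c connected_graph_def by blast
  then obtain k where "k \<in> V1" by blast
  then have "VH \<noteq> {}" by (metis VH_simps(1) empty_iff)
  moreover have "\<forall>u\<in>VH. \<forall>v\<in>VH. EH\<^sup>*\<^sup>* u v"
  proof (intro ballI)
    fix u v assume u: "u \<in> VH" and v: "v \<in> VH"
    have "E1\<^sup>*\<^sup>* (blk u) (blk v)" using G1c blkV[OF u] blkV[OF v] unfolding connected_graph_def by blast
    then have "EH\<^sup>*\<^sup>* (CB (blk u)) (CB (blk v))" by (rule lift_path)
    then show "EH\<^sup>*\<^sup>* u v" using to_root[OF u] to_root[OF v] by (meson rtranclp_trans)
  qed
  ultimately show ?thesis unfolding connected_graph_def by blast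
qed

lemma sumH: "(\<Sum>x\<in>VH. g x) = (\<Sum>k\<in>V1. g (CB k) + (\<Sum>v\<in>V2. g (CO k v)) + (\<Sum>e\<in>ED. g (CS k e)))"
proof -
  have "(\<Sum>x\<in>VH. g x) = (\<Sum>k\<in>V1. \<Sum>x\<in>insert (CB k) (CO k ` V2 \<union> CS k ` ED). g x)"
    unfolding VH_eq using fin1 fin2 ED_fin by (subst sum.UNION_disjoint) auto
  also have "\<dots> = (\<Sum>k\<in>V1. g (CB k) + (\<Sum>v\<in>V2. g (CO k v)) + (\<Sum>e\<in>ED. g (CS k e)))"
  proof (rule sum.cong)
    fix k assume "k \<in> V1"
    have "(\<Sum>x\<in>insert (CB k) (CO k ` V2 \<union> CS k ` ED). g x) = g (CB k) + (\<Sum>x\<in>CO k ` V2 \<union> CS k ` ED. g x)"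
      using fin2 ED_fin by (subst sum.insert) auto
    also have "(\<Sum>x\<in>CO k ` V2 \<union> CS k ` ED. g x) = (\<Sum>x\<in>CO k ` V2. g x) + (\<Sum>x\<in>CS k ` ED. g x)"
      using fin2 ED_fin by (subst sum.union_disjoint) auto
    also have "(\<Sum>x\<in>CO k ` V2. g x) = (\<Sum>v\<in>V2. g (CO k v))" by (subst sum.reindex) (auto simp: inj_on_def)
    also have "(\<Sum>x\<in>CS k ` ED. g x) = (\<Sum>e\<in>ED. g (CS k e))" by (subst sum.reindex) (auto simp: inj_on_def)
    finally show "(\<Sum>x\<in>insert (CB k) (CO k ` V2 \<union> CS k ` ED). g x) = g (CB k) + (\<Sum>v\<in>V2. g (CO k v)) + (\<Sum>e\<in>ED. g (CS k e))"
      by (simp add: add.assoc)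
  qed simp
  finally show ?thesis .
qed

lemma inc_bij: assumes w: "w \<in> V2" shows "bij_betw (\<lambda>b. {w,b}) (N2 w) {e \<in> ED. w \<in> e}"
proof (rule bij_betwI')
  fix b b' assume "b \<in> N2 w" "b' \<in> N2 w"
  then have "b \<noteq> w" "b' \<noteq> w" using E2irr unfolding nbr_def by auto
  then show "({w,b} = {w,b'}) = (b = b')" by (auto simp: doubleton_eq_iff)
next
  fix b assume "b \<in> N2 w"
  then have "E2 w b" unfolding nbr_def by auto
  then show "{w,b} \<in> {e \<in> ED. w \<in> e}" unfolding ED_iff by auto
next
  fix e assume "e \<in> {e \<in> ED. w \<in> e}"
  then have e: "e \<in> ED" "w \<in> e" by auto
  then obtain a b where ab: "e = {a,b}" "E2 a b" "a \<in> V2" "b \<in> V2" by (elim ED_obt)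
  show "\<exists>b\<in>N2 w. e = {w,b}"
  proof (cases "w = a")
    case True then show ?thesis using ab unfolding nbr_def by auto
  next
    case False then have "w = b" using e ab by auto
    then show ?thesis using ab E2sym unfolding nbr_def by (intro bexI[of _ a]) auto
  qed
qed

lemma inc_sum: "w \<in> V2 \<Longrightarrow> (\<Sum>e\<in>{e \<in> ED. w \<in> e}. g e) = (\<Sum>b\<in>N2 w. g {w,b})"
  using sum.reindex_bij_betw[OF inc_bij, of w g] by simp

lemma DC0: "(\<Sum>e\<in>ED. \<Sum>a\<in>e. F a e) = (\<Sum>a\<in>V2. \<Sum>b\<in>N2 a. F a {a,b})"
proof -
  have S1: "(\<Sum>a\<in>V2. \<Sum>b\<in>N2 a. F a {a,b}) = (\<Sum>(a,b)\<in>Sigma V2 N2. F a {a,b})"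
    using fin2 N2_fin by (subst sum.Sigma) auto
  have bij: "bij_betw (\<lambda>(a, b). ({a, b}, a)) (Sigma V2 N2) (Sigma ED (\<lambda>e. e))"
  proof (rule bij_betwI')
    fix x y assume "x \<in> Sigma V2 N2" "y \<in> Sigma V2 N2"
    then show "((case x of (a, b) \<Rightarrow> ({a, b}, a)) = (case y of (a, b) \<Rightarrow> ({a, b}, a))) = (x = y)"
      using E2irr unfolding nbr_def by (cases x; cases y) (auto simp: doubleton_eq_iff)
  next
    fix x assume "x \<in> Sigma V2 N2"
    then show "(case x of (a, b) \<Rightarrow> ({a, b}, a)) \<in> Sigma ED (\<lambda>e. e)"
    proof (cases x)
      case (Pair a b) with \<open>x \<in> Sigma V2 N2\<close> have "E2 a b" unfolding nbr_def by auto
      then have "{a,b} \<in> ED" unfolding ED_iff by (intro exI conjI) (rule refl)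
      then show ?thesis using Pair by simp
    qed
  next
    fix y assume y: "y \<in> Sigma ED (\<lambda>e. e)"
    then obtain e c where yc: "y = (e,c)" "e \<in> ED" "c \<in> e" by auto
    then obtain a b where ab: "e = {a,b}" "E2 a b" "a \<in> V2" "b \<in> V2" by (elim ED_obt)
    show "\<exists>x\<in>Sigma V2 N2. y = (case x of (a, b) \<Rightarrow> ({a, b}, a))"
    proof (cases "c = a")
      case True then show ?thesis using yc ab unfolding nbr_def by (intro bexI[of _ "(a,b)"]) auto
    next
      case False then have "c = b" using yc ab by auto
      then show ?thesis using yc ab E2sym unfolding nbr_def by (intro bexI[of _ "(b,a)"]) auto
    qed
  qed
  have "(\<Sum>x\<in>Sigma V2 N2. (\<lambda>(e,a). F a e) ((\<lambda>(a, b). ({a, b}, a)) x)) = (\<Sum>y\<in>Sigma ED (\<lambda>e. e). (\<lambda>(e,a). F a e) y)"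
    by (rule sum.reindex_bij_betw[OF bij])
  moreover have "(\<Sum>x\<in>Sigma V2 N2. (\<lambda>(e,a). F a e) ((\<lambda>(a, b). ({a, b}, a)) x)) = (\<Sum>(a,b)\<in>Sigma V2 N2. F a {a,b})"
    by (intro sum.cong) auto
  ultimately have "(\<Sum>(a,b)\<in>Sigma V2 N2. F a {a,b}) = (\<Sum>(e,a)\<in>Sigma ED (\<lambda>e. e). F a e)" by simp
  also have "\<dots> = (\<Sum>e\<in>ED. \<Sum>a\<in>e. F a e)"
    using ED_fin e_fin by (subst sum.Sigma) auto
  finally show ?thesis using S1 by simp
qed

end


definition phiO :: "('b \<Rightarrow> 'b \<Rightarrow> real) \<Rightarrow> 'a \<Rightarrow> 'b \<Rightarrow> ('a, 'b) cvert \<Rightarrow> real" where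
  "phiO K k v x = (case x of CB _ \<Rightarrow> 0 | CO k' w \<Rightarrow> if k' = k then 2 * K w v else 0
     | CS k' e \<Rightarrow> if k' = k then (\<Sum>a\<in>e. K a v) else 0)"

definition phiS :: "('b \<Rightarrow> 'b \<Rightarrow> real) \<Rightarrow> 'a \<Rightarrow> 'b set \<Rightarrow> ('a, 'b) cvert \<Rightarrow> real" where
  "phiS K k e0 x = (case x of CB _ \<Rightarrow> 0 | CO k' w \<Rightarrow> if k' = k then (\<Sum>a\<in>e0. K w a) else 0
     | CS k' f \<Rightarrow> if k' = k then ((if f = e0 then 1 else 0) + (\<Sum>c\<in>f. \<Sum>a\<in>e0. K c a)) / 2 else 0)"

definition Phi :: "('b \<Rightarrow> 'b \<Rightarrow> real) \<Rightarrow> ('a, 'b) cvert \<Rightarrow> ('a, 'b) cvert \<Rightarrow> real" where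
  "Phi K u = (case u of CB _ \<Rightarrow> (\<lambda>_. 0) | CO k v \<Rightarrow> phiO K k v | CS k e \<Rightarrow> phiS K k e)"

context cor
begin

lemma LB: assumes k: "k \<in> V1"
  shows "laplacian VH EH x (CB k) = (\<Sum>j\<in>N1 k. x (CB k) - x (CB j)) + (\<Sum>v\<in>V2. x (CB k) - x (CO k v))"
proof -
  have "laplacian VH EH x (CB k) = (\<Sum>u\<in>CB ` N1 k \<union> CO k ` V2. x (CB k) - x u)"
    using lap_alt[OF finVH] nbrB[OF k] by simp
  also have "\<dots> = (\<Sum>u\<in>CB ` N1 k. x (CB k) - x u) + (\<Sum>u\<in>CO k ` V2. x (CB k) - x u)"
    using N1_fin fin2 by (subst sum.union_disjoint) auto
  also have "(\<Sum>u\<in>CB ` N1 k. x (CB k) - x u) = (\<Sum>j\<in>N1 k. x (CB k) - x (CB j))"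
    by (subst sum.reindex) (auto simp: inj_on_def)
  also have "(\<Sum>u\<in>CO k ` V2. x (CB k) - x u) = (\<Sum>v\<in>V2. x (CB k) - x (CO k v))"
    by (subst sum.reindex) (auto simp: inj_on_def)
  finally show ?thesis .
qed

lemma LO: assumes k: "k \<in> V1" and w: "w \<in> V2"
  shows "laplacian VH EH x (CO k w) = (x (CO k w) - x (CB k)) + (\<Sum>b\<in>N2 w. x (CO k w) - x (CS k {w,b}))"
proof -
  have fI: "finite {e \<in> ED. w \<in> e}" using ED_fin by simp
  have "laplacian VH EH x (CO k w) = (\<Sum>u\<in>insert (CB k) (CS k ` {e \<in> ED. w \<in> e}). x (CO k w) - x u)"
    using lap_alt[OF finVH] nbrO[OF k w] by simp
  also have "\<dots> = (x (CO k w) - x (CB k)) + (\<Sum>u\<in>CS k ` {e \<in> ED. w \<in> e}. x (CO k w) - x u)"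
    using fI by (subst sum.insert) auto
  also have "(\<Sum>u\<in>CS k ` {e \<in> ED. w \<in> e}. x (CO k w) - x u) = (\<Sum>e\<in>{e \<in> ED. w \<in> e}. x (CO k w) - x (CS k e))"
    by (subst sum.reindex) (auto simp: inj_on_def)
  also have "\<dots> = (\<Sum>b\<in>N2 w. x (CO k w) - x (CS k {w,b}))"
    by (rule inc_sum[OF w])
  finally show ?thesis .
qed

lemma LS: assumes k: "k \<in> V1" and e: "e \<in> ED"
  shows "laplacian VH EH x (CS k e) = (\<Sum>c\<in>e. x (CS k e) - x (CO k c))"
proof -
  have "laplacian VH EH x (CS k e) = (\<Sum>u\<in>CO k ` e. x (CS k e) - x u)"
    using lap_alt[OF finVH] nbrS[OF k e] by simp
  also have "\<dots> = (\<Sum>c\<in>e. x (CS k e) - x (CO k c))"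
    by (subst sum.reindex) (auto simp: inj_on_def)
  finally show ?thesis .
qed

lemma pair_sum: assumes "b \<in> N2 w" shows "(\<Sum>a\<in>{w,b}. g a) = g w + g b"
proof -
  have "E2 w b" using assms unfolding nbr_def by simp
  then have "w \<noteq> b" using E2irr by metis
  then show ?thesis by simp
qed

lemma e_sum_const: "e \<in> ED \<Longrightarrow> (\<Sum>a\<in>e. c) = 2 * (c::real)"
  using ED_card by simp

end

locale corK = cor +
  fixes K :: "'b \<Rightarrow> 'b \<Rightarrow> real"
  assumes KE: "\<forall>w\<in>V2. \<forall>v\<in>V2. (real r2 + 2) * K w v - (\<Sum>b\<in>N2 w. K b v) = (if w = v then 1 else 0)"
begin

lemma KE': "w \<in> V2 \<Longrightarrow> v \<in> V2 \<Longrightarrow> (\<Sum>b\<in>N2 w. K b v) = (real r2 + 2) * K w v - (if w = v then 1 else 0)"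
  using KE by fastforce

lemma nbr_swap2: "(\<Sum>w\<in>V2. \<Sum>b\<in>N2 w. g w b) = (\<Sum>b\<in>V2. \<Sum>w\<in>N2 b. g w b)"
  by (rule sum_nbr_swap[OF G2s])

lemma colsum: assumes v: "v \<in> V2" shows "(\<Sum>w\<in>V2. K w v) = 1 / 2"
proof -
  have "(\<Sum>w\<in>V2. (real r2 + 2) * K w v - (\<Sum>b\<in>N2 w. K b v)) = (\<Sum>w\<in>V2. if w = v then 1 else 0)"
    using KE v by (intro sum.cong) auto
  also have "\<dots> = 1" using fin2 v by simp
  finally have h: "(real r2 + 2) * (\<Sum>w\<in>V2. K w v) - (\<Sum>w\<in>V2. \<Sum>b\<in>N2 w. K b v) = 1"
    by (simp add: sum_subtractf sum_distrib_left)
  have "(\<Sum>w\<in>V2. \<Sum>b\<in>N2 w. K b v) = (\<Sum>b\<in>V2. \<Sum>w\<in>N2 b. K b v)" by (rule nbr_swap2)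
  also have "\<dots> = (\<Sum>b\<in>V2. real r2 * K b v)" using N2_card by (intro sum.cong) auto
  finally have "(\<Sum>w\<in>V2. \<Sum>b\<in>N2 w. K b v) = real r2 * (\<Sum>w\<in>V2. K w v)" by (simp add: sum_distrib_left)
  with h show ?thesis by (simp add: algebra_simps)
qed

lemma lapO: assumes k: "k \<in> V1" and v: "v \<in> V2" and x: "x \<in> VH"
  shows "laplacian VH EH (phiO K k v) x = (if x = CO k v then 1 else 0) - (if x = CB k then 1 else 0)"
proof (cases x)
  case (CB k')
  then have k': "k' \<in> V1" using x by simp
  have "laplacian VH EH (phiO K k v) x = (\<Sum>v'\<in>V2. - (if k' = k then 2 * K v' v else 0))"
    using LB[OF k'] CB by (simp add: phiO_def)
  also have "\<dots> = - (if k' = k then 1 else 0)"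
    using colsum[OF v] by (auto simp: sum_negf sum_distrib_left[symmetric])
  finally show ?thesis using CB by simp
next
  case (CO k' w)
  then have k': "k' \<in> V1" and w: "w \<in> V2" using x by auto
  show ?thesis
  proof (cases "k' = k")
    case False
    then show ?thesis using LO[OF k' w] CO by (simp add: phiO_def)
  next
    case True
    have "laplacian VH EH (phiO K k v) x = 2 * K w v + (\<Sum>b\<in>N2 w. 2 * K w v - (\<Sum>a\<in>{w,b}. K a v))"
      using LO[OF k' w] CO True by (simp add: phiO_def)
    also have "\<dots> = 2 * K w v + (\<Sum>b\<in>N2 w. 2 * K w v - (K w v + K b v))"
      by (intro arg_cong2[where f = "(+)"] refl sum.cong) (auto simp: pair_sum)
    also have "\<dots> = 2 * K w v + real r2 * K w v - (\<Sum>b\<in>N2 w. K b v)"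
      using N2_card[OF w] by (simp add: sum_subtractf)
    also have "\<dots> = (if w = v then 1 else 0)" using KE' w v by (simp add: algebra_simps)
    finally show ?thesis using CO True by simp
  qed
next
  case (CS k' e)
  then have k': "k' \<in> V1" and e: "e \<in> ED" using x by auto
  show ?thesis
  proof (cases "k' = k")
    case False
    then show ?thesis using LS[OF k' e] CS by (simp add: phiO_def)
  next
    case True
    have "laplacian VH EH (phiO K k v) x = (\<Sum>c\<in>e. (\<Sum>a\<in>e. K a v) - 2 * K c v)"
      using LS[OF k' e] CS True by (simp add: phiO_def)
    also have "\<dots> = 0" using e_sum_const[OF e] by (simp add: sum_subtractf sum_distrib_left[symmetric])
    finally show ?thesis using CS by simp
  qed
qed

lemma ind_edge: assumes w: "w \<in> V2" and e0: "e0 \<in> ED"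
  shows "(\<Sum>b\<in>N2 w. if {w,b} = e0 then 1 else 0) = (if w \<in> e0 then 1 else (0::real))"
proof -
  have "(\<Sum>b\<in>N2 w. if {w,b} = e0 then 1 else (0::real)) = (\<Sum>e\<in>{e \<in> ED. w \<in> e}. if e = e0 then 1 else 0)"
    using inc_sum[OF w, of "\<lambda>e. if e = e0 then 1 else (0::real)"] by simp
  also have "\<dots> = (if w \<in> e0 then 1 else 0)" using ED_fin e0 by simp
  finally show ?thesis .
qed

lemma lapS: assumes k: "k \<in> V1" and e0: "e0 \<in> ED" and x: "x \<in> VH"
  shows "laplacian VH EH (phiS K k e0) x = (if x = CS k e0 then 1 else 0) - (if x = CB k then 1 else 0)"
proof -
  define P where "P = (\<lambda>w. \<Sum>a\<in>e0. K w a)"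
  have e0V: "\<And>a. a \<in> e0 \<Longrightarrow> a \<in> V2" using ED_mem[OF e0] by blast
  have fe0: "finite e0" using e_fin[OF e0] .
  show ?thesis
  proof (cases x)
    case (CB k')
    then have k': "k' \<in> V1" using x by simp
    have "laplacian VH EH (phiS K k e0) x = (\<Sum>v'\<in>V2. - (if k' = k then P v' else 0))"
      using LB[OF k'] CB unfolding P_def by (simp add: phiS_def)
    also have "\<dots> = - (if k' = k then (\<Sum>v'\<in>V2. P v') else 0)"
      by (auto simp: sum_negf)
    also have "(\<Sum>v'\<in>V2. P v') = (\<Sum>a\<in>e0. \<Sum>v'\<in>V2. K v' a)"
      unfolding P_def by (rule sum.swap)
    also have "\<dots> = (\<Sum>a\<in>e0. 1 / 2)" using colsum e0V by (intro sum.cong) auto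
    also have "\<dots> = 1" using e_sum_const[OF e0, of "1/2"] by simp
    finally show ?thesis using CB by simp
  next
    case (CO k' w)
    then have k': "k' \<in> V1" and w: "w \<in> V2" using x by auto
    show ?thesis
    proof (cases "k' = k")
      case False
      then show ?thesis using LO[OF k' w] CO by (simp add: phiS_def)
    next
      case True
      have sP: "(\<Sum>b\<in>N2 w. P b) = (real r2 + 2) * P w - (if w \<in> e0 then 1 else 0)"
      proof -
        have "(\<Sum>b\<in>N2 w. P b) = (\<Sum>a\<in>e0. \<Sum>b\<in>N2 w. K b a)" unfolding P_def by (rule sum.swap)
        also have "\<dots> = (\<Sum>a\<in>e0. (real r2 + 2) * K w a - (if w = a then 1 else 0))"
          using KE' w e0V by (intro sum.cong) auto
        also have "\<dots> = (real r2 + 2) * P w - (if w \<in> e0 then 1 else 0)"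
          using fe0 by (simp add: sum_subtractf sum_distrib_left P_def)
        finally show ?thesis .
      qed
      have "laplacian VH EH (phiS K k e0) x
          = P w + (\<Sum>b\<in>N2 w. P w - ((if {w,b} = e0 then 1 else 0) + (\<Sum>c\<in>{w,b}. P c)) / 2)"
        using LO[OF k' w] CO True unfolding P_def by (simp add: phiS_def)
      also have "\<dots> = P w + (\<Sum>b\<in>N2 w. P w / 2 - P b / 2 - (if {w,b} = e0 then 1 else 0) / 2)"
        by (intro arg_cong2[where f = "(+)"] refl sum.cong) (auto simp: pair_sum field_simps)
      also have "\<dots> = P w + real r2 * P w / 2 - (\<Sum>b\<in>N2 w. P b) / 2 - (\<Sum>b\<in>N2 w. (if {w,b} = e0 then 1 else 0)) / 2"
        using N2_card[OF w] by (simp add: sum_subtractf sum_divide_distrib)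
      also have "\<dots> = 0" using sP ind_edge[OF w e0] by (simp add: algebra_simps)
      finally show ?thesis using CO by simp
    qed
  next
    case (CS k' f)
    then have k': "k' \<in> V1" and f: "f \<in> ED" using x by auto
    show ?thesis
    proof (cases "k' = k")
      case False
      then show ?thesis using LS[OF k' f] CS by (simp add: phiS_def)
    next
      case True
      have "laplacian VH EH (phiS K k e0) x = (\<Sum>c\<in>f. ((if f = e0 then 1 else 0) + (\<Sum>c\<in>f. P c)) / 2 - P c)"
        using LS[OF k' f] CS True unfolding P_def by (simp add: phiS_def)
      also have "\<dots> = 2 * (((if f = e0 then 1 else 0) + (\<Sum>c\<in>f. P c)) / 2) - (\<Sum>c\<in>f. P c)"
        using ED_card[OF f] by (simp add: sum_subtractf)
      also have "\<dots> = (if f = e0 then 1 else 0)" by (simp add: field_simps)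
      finally show ?thesis using CS True by simp
    qed
  qed
qed

lemma lapPhi: assumes u: "u \<in> VH" and x: "x \<in> VH"
  shows "laplacian VH EH (Phi K u) x = (if x = u then 1 else 0) - (if x = CB (blk u) then 1 else 0)"
proof (cases u)
  case (CB k) then show ?thesis by (simp add: Phi_def laplacian_def)
next
  case (CO k v) then show ?thesis using lapO u x by (simp add: Phi_def)
next
  case (CS k e) then show ?thesis using lapS u x by (simp add: Phi_def)
qed

lemma lapLift: assumes x: "x \<in> VH"
  shows "laplacian VH EH (\<lambda>w. y (blk w)) x = (case x of CB k \<Rightarrow> laplacian V1 E1 y k | _ \<Rightarrow> 0)"
proof (cases x)
  case (CB k) then have k: "k \<in> V1" using x by simp
  show ?thesis using LB[OF k] CB lap_alt[OF fin1] by simp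
next
  case (CO k w) then show ?thesis using LO x by simp
next
  case (CS k e) then show ?thesis using LS x by simp
qed

end


lemma lap_add:
  "laplacian V E (\<lambda>w. x w + y w) w = laplacian V E x w + laplacian V E y w"
  by (simp add: laplacian_def sum.distrib algebra_simps)

context corK
begin

lemma resH: assumes u: "u \<in> VH" and v: "v \<in> VH"
  shows "resistance VH EH u v = Phi K u u - Phi K v u - Phi K u v + Phi K v v + resistance V1 E1 (blk u) (blk v)"
proof -
  have bu: "blk u \<in> V1" and bv: "blk v \<in> V1" using blkV u v by auto
  obtain y where y: "\<forall>w\<in>V1. laplacian V1 E1 y w = (if w = blk u then 1 else 0) - (if w = blk v then 1 else 0)"
    using resistance_sol[OF G1s G1c bu bv] by blast
  have r1: "resistance V1 E1 (blk u) (blk v) = y (blk u) - y (blk v)"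
    by (rule resistance_eq[OF G1s G1c bu bv y])
  define Y where "Y = (\<lambda>w. (Phi K u w - Phi K v w) + y (blk w))"
  have "\<forall>w\<in>VH. laplacian VH EH Y w = (if w = u then 1 else 0) - (if w = v then 1 else 0)"
  proof
    fix w assume w: "w \<in> VH"
    have "laplacian VH EH Y w = laplacian VH EH (Phi K u) w - laplacian VH EH (Phi K v) w
        + laplacian VH EH (\<lambda>w. y (blk w)) w"
      unfolding Y_def lap_add lap_diff by simp
    also have "\<dots> = (if w = u then 1 else 0) - (if w = v then 1 else 0)"
    proof (cases w)
      case (CB k) then have k: "k \<in> V1" using w by simp
      show ?thesis using lapPhi[OF u w] lapPhi[OF v w] lapLift[OF w] y k CB by auto
    next
      case (CO k x) then show ?thesis using lapPhi[OF u w] lapPhi[OF v w] lapLift[OF w] by auto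
    next
      case (CS k x) then show ?thesis using lapPhi[OF u w] lapPhi[OF v w] lapLift[OF w] by auto
    qed
    finally show "laplacian VH EH Y w = (if w = u then 1 else 0) - (if w = v then 1 else 0)" .
  qed
  from resistance_eq[OF simpleH connH u v this] r1 show ?thesis by (simp add: Y_def)
qed

lemma QQ: "(\<Sum>e\<in>ED. \<Sum>c\<in>e. \<Sum>a\<in>e. K c a) = (2 * real r2 + 2) * (\<Sum>v\<in>V2. K v v) - real (card V2)"
proof -
  have "(\<Sum>e\<in>ED. \<Sum>c\<in>e. \<Sum>a\<in>e. K c a) = (\<Sum>c\<in>V2. \<Sum>b\<in>N2 c. \<Sum>a\<in>{c,b}. K c a)"
    by (rule DC0)
  also have "\<dots> = (\<Sum>c\<in>V2. \<Sum>b\<in>N2 c. K c c + K c b)"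
    by (intro sum.cong refl) (simp add: pair_sum)
  also have "\<dots> = (\<Sum>c\<in>V2. real r2 * K c c) + (\<Sum>c\<in>V2. \<Sum>b\<in>N2 c. K c b)"
    using N2_card by (simp add: sum.distrib)
  also have "(\<Sum>c\<in>V2. \<Sum>b\<in>N2 c. K c b) = (\<Sum>b\<in>V2. \<Sum>c\<in>N2 b. K c b)"
    by (rule nbr_swap2)
  also have "\<dots> = (\<Sum>b\<in>V2. (real r2 + 2) * K b b - 1)"
    using KE' by (intro sum.cong) auto
  also have "\<dots> = (real r2 + 2) * (\<Sum>v\<in>V2. K v v) - real (card V2)"
    by (simp add: sum_subtractf sum_distrib_left)
  also have "(\<Sum>c\<in>V2. real r2 * K c c) = real r2 * (\<Sum>v\<in>V2. K v v)"
    by (simp add: sum_distrib_left)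
  finally show ?thesis by (simp add: algebra_simps)
qed

lemma Dsum: "(\<Sum>u\<in>VH. Phi K u u) = real (card V1) * ((real r2 + 3) * (\<Sum>v\<in>V2. K v v)
     + real (card ED) / 2 - real (card V2) / 2)"
proof -
  have "(\<Sum>u\<in>VH. Phi K u u) = (\<Sum>k\<in>V1. 0 + (\<Sum>v\<in>V2. 2 * K v v) + (\<Sum>e\<in>ED. (1 + (\<Sum>c\<in>e. \<Sum>a\<in>e. K c a)) / 2))"
    unfolding sumH by (simp add: Phi_def phiO_def phiS_def)
  also have "\<dots> = real (card V1) * (2 * (\<Sum>v\<in>V2. K v v) + (real (card ED) + (\<Sum>e\<in>ED. \<Sum>c\<in>e. \<Sum>a\<in>e. K c a)) / 2)"
    by (simp add: sum.distrib sum_divide_distrib[symmetric] sum_distrib_left[symmetric])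
  also have "\<dots> = real (card V1) * ((real r2 + 3) * (\<Sum>v\<in>V2. K v v) + real (card ED) / 2 - real (card V2) / 2)"
    unfolding QQ by (simp add: field_simps)
  finally show ?thesis .
qed

lemma sum_inc1: "(\<Sum>e\<in>ED. \<Sum>a\<in>e. g a) = real r2 * (\<Sum>a\<in>V2. g a)"
proof -
  have "(\<Sum>e\<in>ED. \<Sum>a\<in>e. g a) = (\<Sum>a\<in>V2. \<Sum>b\<in>N2 a. g a)" by (rule DC0)
  also have "\<dots> = (\<Sum>a\<in>V2. real r2 * g a)" using N2_card by simp
  finally show ?thesis by (simp add: sum_distrib_left)
qed

lemma colO: assumes k: "k \<in> V1" and v: "v \<in> V2"
  shows "(\<Sum>x\<in>VH. phiO K k v x) = 1 + real r2 / 2"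
proof -
  define A where "A = (\<Sum>w\<in>V2. 2 * K w v) + (\<Sum>e\<in>ED. \<Sum>a\<in>e. K a v)"
  have "(\<Sum>x\<in>VH. phiO K k v x) = (\<Sum>k'\<in>V1. if k' = k then A else 0)"
    unfolding sumH A_def by (intro sum.cong refl) (simp add: phiO_def)
  also have "\<dots> = A" using fin1 k by simp
  also have "A = 1 + real r2 / 2" unfolding A_def
    using sum_inc1[of "\<lambda>a. K a v"] colsum[OF v] by (simp add: sum_distrib_left[symmetric])
  finally show ?thesis .
qed

lemma colS: assumes k: "k \<in> V1" and e0: "e0 \<in> ED"
  shows "(\<Sum>x\<in>VH. phiS K k e0 x) = 3 / 2 + real r2 / 2"
proof -
  define P where "P = (\<lambda>w. \<Sum>a\<in>e0. K w a)"
  have sP: "(\<Sum>w\<in>V2. P w) = 1"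
  proof -
    have "(\<Sum>w\<in>V2. P w) = (\<Sum>a\<in>e0. \<Sum>w\<in>V2. K w a)" unfolding P_def by (rule sum.swap)
    also have "\<dots> = (\<Sum>a\<in>e0. 1 / 2)" using colsum ED_mem[OF e0] by (intro sum.cong) auto
    also have "\<dots> = 1" using e_sum_const[OF e0, of "1/2"] by simp
    finally show ?thesis .
  qed
  define A where "A = (\<Sum>w\<in>V2. P w) + (\<Sum>f\<in>ED. ((if f = e0 then 1 else 0) + (\<Sum>c\<in>f. P c)) / 2)"
  have "(\<Sum>x\<in>VH. phiS K k e0 x) = (\<Sum>k'\<in>V1. if k' = k then A else 0)"
    unfolding sumH A_def P_def by (intro sum.cong refl) (simp add: phiS_def)
  also have "\<dots> = A" using fin1 k by simp
  also have "(\<Sum>f\<in>ED. ((if f = e0 then 1 else 0) + (\<Sum>c\<in>f. P c)) / 2) = (1 + real r2) / 2"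
    using sum_inc1[of P] sP ED_fin e0 by (simp add: sum.distrib sum_divide_distrib[symmetric])
  then have "A = 3 / 2 + real r2 / 2" unfolding A_def using sP by (simp add: field_simps)
  finally show ?thesis .
qed

lemma Colsum: "(\<Sum>y\<in>VH. \<Sum>x\<in>VH. Phi K y x) = real (card V1) *
    (real (card V2) * (1 + real r2 / 2) + real (card ED) * (3 / 2 + real r2 / 2))"
proof -
  have "(\<Sum>y\<in>VH. \<Sum>x\<in>VH. Phi K y x) = (\<Sum>k\<in>V1. 0 + (\<Sum>v\<in>V2. 1 + real r2 / 2) + (\<Sum>e\<in>ED. 3 / 2 + real r2 / 2))"
    unfolding sumH[of "\<lambda>y. \<Sum>x\<in>VH. Phi K y x"]
    by (intro sum.cong refl) (simp add: Phi_def colO colS del: VH_simps)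
  also have "\<dots> = real (card V1) * (real (card V2) * (1 + real r2 / 2) + real (card ED) * (3 / 2 + real r2 / 2))"
    by simp
  finally show ?thesis .
qed

end


context corK
begin

lemma sum_blk: "(\<Sum>x\<in>VH. g (blk x)) = (1 + real (card V2) + real (card ED)) * (\<Sum>k\<in>V1. g k)"
proof -
  have "(\<Sum>x\<in>VH. g (blk x)) = (\<Sum>k\<in>V1. (1 + real (card V2) + real (card ED)) * g k)"
    unfolding sumH by (intro sum.cong refl) (simp add: algebra_simps)
  then show ?thesis by (simp add: sum_distrib_left)
qed

lemma cardVH: "real (card VH) = real (card V1) * (1 + real (card V2) + real (card ED))"
proof -
  have "(\<Sum>x\<in>VH. (\<lambda>k. 1::real) (blk x)) = (1 + real (card V2) + real (card ED)) * (\<Sum>k\<in>V1. 1)"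
    by (rule sum_blk)
  then show ?thesis by simp
qed

lemma r1_diag: "k \<in> V1 \<Longrightarrow> resistance V1 E1 k k = 0"
  using resistance_eq[OF G1s G1c, of k k "\<lambda>_. 0"] by (simp add: laplacian_def)

lemma kf_diag:
  assumes fin: "finite V" and d: "\<forall>u\<in>V. R u u = 0"
  shows "(\<Sum>u\<in>V. \<Sum>v\<in>V - {u}. R u v) = (\<Sum>u\<in>V. \<Sum>v\<in>V. (R u v :: real))"
proof (rule sum.cong[OF refl])
  fix u assume u: "u \<in> V"
  have "(\<Sum>v\<in>V. R u v) = R u u + (\<Sum>v\<in>V - {u}. R u v)" using fin u by (simp add: sum.remove)
  then show "(\<Sum>v\<in>V - {u}. R u v) = (\<Sum>v\<in>V. R u v)" using d u by simp
qed

lemma kfH: "kirchhoff VH EH = real (card VH) * (\<Sum>u\<in>VH. Phi K u u) - (\<Sum>y\<in>VH. \<Sum>x\<in>VH. Phi K y x)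
   + (1 + real (card V2) + real (card ED))^2 * kirchhoff V1 E1"
proof -
  let ?N = "1 + real (card V2) + real (card ED)"
  let ?R = "resistance VH EH" and ?r = "resistance V1 E1"
  have RH: "\<And>u v. u \<in> VH \<Longrightarrow> v \<in> VH \<Longrightarrow> ?R u v = Phi K u u - Phi K v u - Phi K u v + Phi K v v + ?r (blk u) (blk v)"
    by (rule resH)
  have d: "\<forall>u\<in>VH. ?R u u = 0" using RH r1_diag blkV by simp
  have "(\<Sum>u\<in>VH. \<Sum>v\<in>VH - {u}. ?R u v) = (\<Sum>u\<in>VH. \<Sum>v\<in>VH. ?R u v)"
    by (rule kf_diag[of VH ?R, OF finVH d])
  also have "\<dots> = (\<Sum>u\<in>VH. \<Sum>v\<in>VH. Phi K u u - Phi K v u - Phi K u v + Phi K v v + ?r (blk u) (blk v))"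
    using RH by (intro sum.cong refl) auto
  also have "\<dots> = (\<Sum>u\<in>VH. \<Sum>v\<in>VH. Phi K u u) - (\<Sum>u\<in>VH. \<Sum>v\<in>VH. Phi K v u) - (\<Sum>u\<in>VH. \<Sum>v\<in>VH. Phi K u v)
      + (\<Sum>u\<in>VH. \<Sum>v\<in>VH. Phi K v v) + (\<Sum>u\<in>VH. \<Sum>v\<in>VH. ?r (blk u) (blk v))"
    by (simp add: sum.distrib sum_subtractf)
  also have "(\<Sum>u\<in>VH. \<Sum>v\<in>VH. Phi K v u) = (\<Sum>v\<in>VH. \<Sum>u\<in>VH. Phi K v u)" by (rule sum.swap)
  also have "(\<Sum>u\<in>VH. \<Sum>v\<in>VH. Phi K u u) = real (card VH) * (\<Sum>u\<in>VH. Phi K u u)"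
    by (simp add: sum_distrib_right[symmetric] mult.commute)
  also have "(\<Sum>u\<in>VH. \<Sum>v\<in>VH. Phi K v v) = real (card VH) * (\<Sum>u\<in>VH. Phi K u u)"
    by simp
  also have "(\<Sum>u\<in>VH. \<Sum>v\<in>VH. ?r (blk u) (blk v)) = ?N * ?N * (\<Sum>i\<in>V1. \<Sum>j\<in>V1. ?r i j)"
  proof -
    have "(\<Sum>u\<in>VH. \<Sum>v\<in>VH. ?r (blk u) (blk v)) = (\<Sum>u\<in>VH. ?N * (\<Sum>j\<in>V1. ?r (blk u) j))"
      using sum_blk[of "?r (blk _)"] by (intro sum.cong refl) (rule sum_blk)
    also have "\<dots> = ?N * (\<Sum>u\<in>VH. (\<lambda>i. \<Sum>j\<in>V1. ?r i j) (blk u))" by (simp add: sum_distrib_left)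
    also have "\<dots> = ?N * (?N * (\<Sum>i\<in>V1. \<Sum>j\<in>V1. ?r i j))"
      using sum_blk[of "\<lambda>i. \<Sum>j\<in>V1. ?r i j"] by simp
    finally show ?thesis by simp
  qed
  finally have tot: "(\<Sum>u\<in>VH. \<Sum>v\<in>VH - {u}. ?R u v) = 2 * (real (card VH) * (\<Sum>u\<in>VH. Phi K u u))
     - 2 * (\<Sum>y\<in>VH. \<Sum>x\<in>VH. Phi K y x) + ?N * ?N * (\<Sum>i\<in>V1. \<Sum>j\<in>V1. ?r i j)" by simp
  have "(\<Sum>i\<in>V1. \<Sum>j\<in>V1 - {i}. ?r i j) = (\<Sum>i\<in>V1. \<Sum>j\<in>V1. ?r i j)"
    using kf_diag[OF fin1, of ?r] r1_diag by simp
  then have "kirchhoff V1 E1 = (\<Sum>i\<in>V1. \<Sum>j\<in>V1. ?r i j) / 2" unfolding kirchhoff_def by simp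
  then show ?thesis unfolding kirchhoff_def tot by (simp add: power2_eq_square field_simps)
qed

end


theorem corollary4p2:
  fixes V1 :: "'a set" and E1 :: "'a \<Rightarrow> 'a \<Rightarrow> bool"
    and V2 :: "'b set" and E2 :: "'b \<Rightarrow> 'b \<Rightarrow> bool"
    and n1 m1 n2 m2 r2 :: nat and f :: "nat \<Rightarrow> 'b" and mu :: "nat \<Rightarrow> real"
  assumes G1: "simple_graph V1 E1" "connected_graph V1 E1"
    and n1: "n1 = card V1" and m1: "m1 = card (edges V1 E1)"
    and G2: "simple_graph V2 E2" "regular_graph V2 E2 r2"
    and n2: "n2 = card V2" and m2: "m2 = card (edges V2 E2)"
    and f: "bij_betw f {..<n2} V2"
    and mu: "char_poly (laplacian_mat V2 E2 f n2) = (\<Prod>i<n2. [:- mu i, 1:])"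
  shows "kirchhoff (corona_V V1 V2 E2) (corona_E V1 E1 V2 E2)
    = real n1 * (1 + real n2 + real m2) *
        (real n1 * real m2 / 2
         + real n1 / 2 * (2 * real r2 * (\<Sum>i<n2. 1 / (mu i + 2)) - (\<Sum>i<n2. mu i / (mu i + 2)))
         + 2 * real n1 * (\<Sum>i<n2. 1 / (mu i + 2))
         + (real m2 + real n2 + 1) / real n1 * kirchhoff V1 E1)
      - real n1 * real n2 * (real r2)\<^sup>2 / 4
      - (5 * real n1 * real m2 + 2 * real n1 * real n2) / 2"
proof -
  interpret cor V1 E1 V2 E2 r2 using G1 G2 by unfold_locales
  obtain K where KE: "\<forall>w\<in>V2. \<forall>v\<in>V2. (real r2 + 2) * K w v - (\<Sum>b\<in>nbr V2 E2 w. K b v) = (if w = v then 1 else 0)"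
    and KT: "(\<Sum>v\<in>V2. K v v) = (\<Sum>i<n2. 1 / (mu i + 2))" and mu2: "\<forall>i<n2. mu i + 2 \<noteq> 0"
    using K_exists[OF G2 f mu] by blast
  interpret corK V1 E1 V2 E2 r2 K using KE by unfold_locales
  define t where "t = (\<Sum>i<n2. 1 / (mu i + 2))"
  have smu: "(\<Sum>i<n2. mu i / (mu i + 2)) = real n2 - 2 * t"
  proof -
    have "(\<Sum>i<n2. mu i / (mu i + 2)) = (\<Sum>i<n2. 1 - 2 * (1 / (mu i + 2)))"
      using mu2 by (intro sum.cong refl) (auto simp: field_simps)
    then show ?thesis by (simp add: sum_subtractf sum_distrib_left t_def)
  qed
  have hs: "2 * real m2 = real n2 * real r2"
  proof -
    have "(\<Sum>e\<in>ED. \<Sum>a\<in>e. (1::real)) = real r2 * (\<Sum>a\<in>V2. 1)" by (rule sum_inc1)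
    moreover have "(\<Sum>e\<in>ED. \<Sum>a\<in>e. (1::real)) = (\<Sum>e\<in>ED. 2)" using ED_card by (intro sum.cong) auto
    ultimately show ?thesis using m2 n2 by (simp add: algebra_simps)
  qed
  have n1pos: "real n1 > 0"
  proof -
    have "V1 \<noteq> {}" using G1(2) connected_graph_def by blast
    then show ?thesis using n1 fin1 by (simp add: card_gt_0_iff)
  qed
  have KF: "kirchhoff VH EH = real n1 * (1 + real n2 + real m2) * (real n1 * ((real r2 + 3) * t + real m2 / 2 - real n2 / 2))
     - real n1 * (real n2 * (1 + real r2 / 2) + real m2 * (3 / 2 + real r2 / 2))
     + (1 + real n2 + real m2)^2 * kirchhoff V1 E1"
    using kfH cardVH Dsum Colsum KT n1 n2 m2 t_def by simp
  have m2r: "real m2 = real n2 * real r2 / 2" using hs by simp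
  show ?thesis unfolding KF smu t_def[symmetric] m2r
    using n1pos by (simp add: field_simps power2_eq_square)
qed


end
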